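(* There exists a universal constant $c_1>0$ such that for all integers $a\ge1$ and $i\ge1$, \[ e^{-c_1(2a)^{-2i/3}}\le g_{a,i}\le e^{c_1(2a)^{-2i/3}}. \] Consequently, $e^{-(c_1/4)/a^2}\le g_{a,i}\le e^{(c_1/4)/a^2}$ for all $a,i\ge1$.
   Context: For integers $a,i\ge1$ let $f_{a,i}=\frac1{2i}\sum_{d\mid i,\ d\text{ odd}}\mu(d)(2a)^{i/d}$, where $\mu$ is the Möbius function and the sum is over positive odd divisors $d$ of $i$, and define $g_{a,i}$ by $f_{a,i}=\frac{(2a)^i}{2i}g_{a,i}$. *)

theory Defs
  imports Complex_Main "HOL-Computational_Algebra.Squarefree" "HOL-Computational_Algebra.Primes"
begin

text \<open>Moebius function on positive integers (mu 0 = 0 by convention, never used).\<close>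
definition moebius_mu :: "nat \<Rightarrow> int" where
  "moebius_mu d = (if d = 0 then 0 else if squarefree d then (-1) ^ card (prime_factors d) else 0)"

definition f_ai :: "nat \<Rightarrow> nat \<Rightarrow> real" where
  "f_ai a i = (1 / (2 * real i)) *
     (\<Sum>d\<in>{d. d dvd i \<and> odd d}. real_of_int (moebius_mu d) * (2 * real a) ^ (i div d))"

definition g_ai :: "nat \<Rightarrow> nat \<Rightarrow> real" where
  "g_ai a i = f_ai a i * (2 * real i) / (2 * real a) ^ i"

end

theory Submission
  imports Defs
begin

lemma geo_bound:
  fixes x :: real assumes "x \<ge> 2"
  shows "(\<Sum>j\<in>{1..m}. x ^ j) \<le> 2 * x ^ m"
proof (induction m)
  case 0 then show ?case by simp
next
  case (Suc m)
  have "2 * x ^ m \<le> x ^ Suc m" using assms by (simp add: mult_right_mono)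
  then show ?case using Suc by simp
qed

lemma mu_abs: "\<bar>real_of_int (moebius_mu d)\<bar> \<le> 1"
  by (simp add: moebius_mu_def)

lemma g_formula:
  assumes "i \<ge> 1" "a \<ge> 1"
  shows "g_ai a i = (\<Sum>d\<in>{d. d dvd i \<and> odd d}. real_of_int (moebius_mu d) * (2 * real a) ^ (i div d) / (2 * real a) ^ i)"
proof -
  have "real i > 0" "(2 * real a) ^ i > 0" using assms by auto
  then show ?thesis unfolding g_ai_def f_ai_def sum_divide_distrib[symmetric]
    by (simp add: field_simps)
qed

lemma key:
  assumes i: "i \<ge> 1" and a: "a \<ge> 1"
  shows "\<bar>g_ai a i - 1\<bar> \<le> 2 * (2 * real a) ^ (i div 3) / (2 * real a) ^ i"
    and "i < 3 \<Longrightarrow> g_ai a i = 1"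
proof -
  define x where "x = 2 * real a"
  have x2: "x \<ge> 2" using a by (simp add: x_def)
  define D where "D = {d. d dvd i \<and> odd d}"
  have finD: "finite D" unfolding D_def using i by (auto intro: finite_subset[of _ "{..i}"] dest: dvd_imp_le)
  have oneD: "1 \<in> D" by (simp add: D_def)
  have mu1: "moebius_mu 1 = 1" by (simp add: moebius_mu_def)
  define h where "h d = real_of_int (moebius_mu d) * x ^ (i div d) / x ^ i" for d
  have g: "g_ai a i = sum h D" unfolding h_def D_def x_def by (rule g_formula[OF i a])
  have "sum h D = h 1 + sum h (D - {1})" using finD oneD by (simp add: sum.remove)
  moreover have "h 1 = 1" using x2 unfolding h_def mu1 by simp
  ultimately have g1: "g_ai a i - 1 = sum h (D - {1})" using g by simp
  have Dprop: "3 \<le> d \<and> d \<le> i \<and> d dvd i" if "d \<in> D - {1}" for d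
  proof -
    have "d dvd i" "odd d" "d \<noteq> 1" using that by (auto simp: D_def)
    moreover have "d \<noteq> 0" using \<open>odd d\<close> by (metis even_zero)
    moreover have "d \<noteq> 2" using \<open>odd d\<close> by auto
    moreover have "d \<le> i" using \<open>d dvd i\<close> i by (simp add: dvd_imp_le)
    ultimately show ?thesis by auto
  qed
  show "i < 3 \<Longrightarrow> g_ai a i = 1"
  proof -
    assume "i < 3"
    then have "D - {1} = {}" using Dprop by force
    then have "sum h (D - {1}) = 0" by (simp only: sum.empty)
    then show ?thesis using g1 by simp
  qed
  have inj: "inj_on (\<lambda>d. i div d) (D - {1})"
  proof (rule inj_onI)
    fix d e assume "d \<in> D - {1}" "e \<in> D - {1}" "i div d = i div e"
    then have p: "d dvd i" "e dvd i" "i div d = i div e" "d > 0" using Dprop[of d] Dprop[of e] by auto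
    have "i div d * d = i" "i div e * e = i" using p(1,2) by simp_all
    moreover have "i div d > 0" using p i by (metis Dprop \<open>d \<in> D - {1}\<close> div_greater_zero_iff less_le_trans zero_less_numeral)
    ultimately show "d = e" using p(3) by (metis mult_left_cancel less_not_refl2)
  qed
  have img: "(\<lambda>d. i div d) ` (D - {1}) \<subseteq> {1..i div 3}"
  proof
    fix j assume "j \<in> (\<lambda>d. i div d) ` (D - {1})"
    then obtain d where d: "d \<in> D - {1}" "j = i div d" by auto
    have p: "3 \<le> d" "d \<le> i" "d dvd i" using Dprop[OF d(1)] by auto
    have "0 < i div d" using p by (subst div_greater_zero_iff) auto
    then have "1 \<le> i div d" by simp
    moreover have "i div d \<le> i div 3" using p by (simp add: div_le_mono2)
    ultimately show "j \<in> {1..i div 3}" using d by simp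
  qed
  have "\<bar>g_ai a i - 1\<bar> \<le> (\<Sum>d\<in>D - {1}. \<bar>h d\<bar>)" using g1 by (simp add: sum_abs)
  also have "\<dots> \<le> (\<Sum>d\<in>D - {1}. x ^ (i div d) / x ^ i)"
  proof (rule sum_mono)
    fix d
    have "\<bar>h d\<bar> = \<bar>real_of_int (moebius_mu d)\<bar> * (x ^ (i div d) / x ^ i)"
      using x2 by (simp add: h_def abs_mult)
    also have "\<dots> \<le> 1 * (x ^ (i div d) / x ^ i)"
      using x2 mu_abs by (intro mult_right_mono) auto
    finally show "\<bar>h d\<bar> \<le> x ^ (i div d) / x ^ i" by simp
  qed
  also have "\<dots> = (\<Sum>j\<in>(\<lambda>d. i div d) ` (D - {1}). x ^ j / x ^ i)"
    using inj by (simp add: sum.reindex)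
  also have "\<dots> \<le> (\<Sum>j\<in>{1..i div 3}. x ^ j / x ^ i)"
    using img x2 by (intro sum_mono2) auto
  also have "\<dots> = (\<Sum>j\<in>{1..i div 3}. x ^ j) / x ^ i" by (simp add: sum_divide_distrib)
  also have "\<dots> \<le> 2 * x ^ (i div 3) / x ^ i"
    using geo_bound[OF x2] x2 by (intro divide_right_mono) auto
  finally show "\<bar>g_ai a i - 1\<bar> \<le> 2 * (2 * real a) ^ (i div 3) / (2 * real a) ^ i"
    by (simp add: x_def)
qed

lemma exp_bounds:
  fixes g y :: real assumes "\<bar>g - 1\<bar> \<le> 2 * y" "0 \<le> y" "y \<le> 1/4"
  shows "exp (- 4 * y) \<le> g \<and> g \<le> exp (4 * y)"
proof
  have "1 + 4 * y \<le> exp (4 * y)" by (rule exp_ge_add_one_self)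
  then show "g \<le> exp (4 * y)" using assms by linarith
  have "exp (- 4 * y) * exp (4 * y) = 1" by (simp flip: exp_add)
  then have "exp (- 4 * y) = 1 / exp (4 * y)" by (simp add: eq_divide_eq)
  also have "\<dots> \<le> 1 / (1 + 4 * y)" using \<open>1 + 4 * y \<le> exp (4 * y)\<close> assms
    by (intro divide_left_mono) auto
  also have "\<dots> \<le> 1 - 2 * y"
  proof -
    have "1 \<le> (1 - 2 * y) * (1 + 4 * y)" proof -
      have "(1 - 2 * y) * (1 + 4 * y) = 1 + 2 * y * (1 - 4 * y)" by (simp add: algebra_simps)
      moreover have "2 * y * (1 - 4 * y) \<ge> 0" using assms by (intro mult_nonneg_nonneg) auto
      ultimately show ?thesis by linarith
    qed
    moreover have "1 + 4 * y > 0" using assms by linarith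
    ultimately show ?thesis by (simp add: pos_divide_le_eq mult.commute)
  qed
  also have "\<dots> \<le> g" using assms by linarith
  finally show "exp (- 4 * y) \<le> g" .
qed

lemma y_bounds:
  assumes i: "i \<ge> 3" and a: "a \<ge> 1"
  shows "2 * (2 * real a) ^ (i div 3) / (2 * real a) ^ i \<le> 2 * (2 * real a) powr (- 2 * real i / 3)"
    and "(2 * real a) powr (- 2 * real i / 3) \<le> 1 / (4 * (real a)^2)"
proof -
  define x where "x = 2 * real a"
  have x2: "x \<ge> 2" using a by (simp add: x_def)
  have xp: "x > 0" using x2 by linarith
  have e1: "x ^ (i div 3) = x powr real (i div 3)" using xp by (rule powr_realpow[symmetric])
  have e2: "x ^ i = x powr real i" using xp by (rule powr_realpow[symmetric])
  have "x ^ (i div 3) / x ^ i = x powr (real (i div 3) - real i)"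
    unfolding e1 e2 by (rule powr_diff[symmetric])
  also have "\<dots> \<le> x powr (- 2 * real i / 3)"
  proof (rule powr_mono)
    have "3 * (i div 3) \<le> i" using div_times_less_eq_dividend[of i 3] by (simp only: mult.commute)
    then have "real (3 * (i div 3)) \<le> real i" by (rule of_nat_mono)
    then have "3 * real (i div 3) \<le> real i" by simp
    then show "real (i div 3) - real i \<le> - 2 * real i / 3" by linarith
    show "1 \<le> x" using x2 by linarith
  qed
  finally have "x ^ (i div 3) / x ^ i \<le> x powr (- 2 * real i / 3)" .
  then show "2 * (2 * real a) ^ (i div 3) / (2 * real a) ^ i \<le> 2 * (2 * real a) powr (- 2 * real i / 3)"
    unfolding x_def by linarith
  have "x powr (- 2 * real i / 3) \<le> x powr (- 2)"
  proof (rule powr_mono)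
    show "- 2 * real i / 3 \<le> - 2" using i by linarith
    show "1 \<le> x" using x2 by linarith
  qed
  also have "x powr (- 2) = inverse (x powr 2)" by (rule powr_minus)
  also have "x powr 2 = x ^ 2" using powr_realpow[OF xp, of 2] by simp
  also have "inverse (x ^ 2) = 1 / (4 * (real a)^2)" unfolding x_def by (simp add: power_mult_distrib inverse_eq_divide)
  finally show "(2 * real a) powr (- 2 * real i / 3) \<le> 1 / (4 * (real a)^2)" unfolding x_def .
qed

theorem lemma3p1:
  shows "\<exists>c1::real. c1 > 0 \<and>
    (\<forall>a i :: nat. a \<ge> 1 \<longrightarrow> i \<ge> 1 \<longrightarrow>
       exp (- c1 * (2 * real a) powr (- 2 * real i / 3)) \<le> g_ai a i \<and>
       g_ai a i \<le> exp (c1 * (2 * real a) powr (- 2 * real i / 3))) \<and>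
    (\<forall>a i :: nat. a \<ge> 1 \<longrightarrow> i \<ge> 1 \<longrightarrow>
       exp (- (c1 / 4) / (real a)^2) \<le> g_ai a i \<and>
       g_ai a i \<le> exp ((c1 / 4) / (real a)^2))"
proof (intro exI[of _ 4] conjI allI impI)
  fix a i :: nat assume a: "a \<ge> 1" and i: "i \<ge> 1"
  define y where "y = (2 * real a) powr (- 2 * real i / 3)"
  have y0: "y \<ge> 0" by (simp add: y_def)
  have r: "exp (- 4 * y) \<le> g_ai a i \<and> g_ai a i \<le> exp (4 * y) \<and>
      exp (- (4 / 4) / (real a)^2) \<le> g_ai a i \<and> g_ai a i \<le> exp ((4 / 4) / (real a)^2)"
  proof (cases "i < 3")
    case True
    then have "g_ai a i = 1" using key(2)[OF i a] by simp
    then show ?thesis using y0 by simp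
  next
    case False
    then have i3: "i \<ge> 3" by simp
    have yb: "y \<le> 1 / (4 * (real a)^2)" using y_bounds(2)[OF i3 a] by (simp add: y_def)
    have "1 / (4 * (real a)^2) \<le> 1/4" using a by (simp add: divide_simps)
    then have y4: "y \<le> 1/4" using yb by linarith
    have gb: "\<bar>g_ai a i - 1\<bar> \<le> 2 * y" using key(1)[OF i a] y_bounds(1)[OF i3 a] by (simp add: y_def)
    have e: "exp (- 4 * y) \<le> g_ai a i \<and> g_ai a i \<le> exp (4 * y)" by (rule exp_bounds[OF gb y0 y4])
    have "4 * y \<le> 1 / (real a)^2" using yb a by (simp add: divide_simps)
    then have "exp (- (4 / 4) / (real a)^2) \<le> exp (- 4 * y)" "exp (4 * y) \<le> exp ((4 / 4) / (real a)^2)"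
      by simp_all
    then show ?thesis using e by linarith
  qed
  then show "exp (- 4 * (2 * real a) powr (- 2 * real i / 3)) \<le> g_ai a i"
    "g_ai a i \<le> exp (4 * (2 * real a) powr (- 2 * real i / 3))"
    "exp (- (4 / 4) / (real a)^2) \<le> g_ai a i" "g_ai a i \<le> exp ((4 / 4) / (real a)^2)"
    unfolding y_def by auto
qed (simp)

end
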